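(* Let $K$ be a field of prime characteristic $p$, $C$ a cyclic $p$-group of order $q>1$, and $\tilde C$ its subgroup of index $p$. Let $A,B\in P_{KC}$. If $\alpha_1(A)=\alpha_1(B)$ and $A\!\downarrow_{\tilde C}=B\!\downarrow_{\tilde C}$, then $A=B$.
   Context: The indecomposable $KC$-modules up to isomorphism are $V_1,\dots,V_q$ with $\dim V_r=r$; $R_{KC}$ is the Green ring with $\mathbb{Z}$-basis $V_1,\dots,V_q$ (addition from direct sum, multiplication from tensor product). $P_{KC}$ is the $\mathbb{Z}$-span of the permutation modules, which has $\mathbb{Z}$-basis $V_1,V_p,V_{p^2},\dots,V_q$. For $A=\sum_i\alpha_i(A)V_i\in R_{KC}$, $\alpha_1(A)$ is the coefficient of $V_1$. $A\mapsto A\!\downarrow_{\tilde C}$ is the ring homomorphism $R_{KC}\to R_{K\tilde C}$ induced by restriction. *)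

theory Defs
  imports "Jordan_Normal_Form.Jordan_Normal_Form_Uniqueness"
begin

(* Elements of the Green ring R_{KC}, C cyclic of order q, are represented by their
   coordinate functions r \<mapsto> \<alpha>_r(A) with respect to the basis V_1,...,V_q
   (coordinates outside {1..q} are zero). *)
definition green_elems :: "nat \<Rightarrow> (nat \<Rightarrow> int) set" where
  "green_elems q = {A. \<forall>r. A r \<noteq> 0 \<longrightarrow> 1 \<le> r \<and> r \<le> q}"

(* P_{KC}: Z-span of V_1, V_p, V_{p^2}, ..., V_q  (q = p^n) *)
definition perm_span :: "nat \<Rightarrow> nat \<Rightarrow> (nat \<Rightarrow> int) set" where
  "perm_span p n = {A \<in> green_elems (p ^ n). \<forall>r. A r \<noteq> 0 \<longrightarrow> (\<exists>i\<le>n. r = p ^ i)}"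

(* The indecomposable KC-module V_r: K^r with a generator g of C acting by the
   unipotent Jordan block of size r. *)
definition V_mat :: "'a itself \<Rightarrow> nat \<Rightarrow> 'a :: field mat" where
  "V_mat _ r = jordan_block r (1::'a)"

(* For a K<h>-module given by the matrix M of the generator h (h unipotent), the number
   of indecomposable summands V_k (Jordan blocks of size k for eigenvalue 1). *)
definition indec_mult :: "'a :: field mat \<Rightarrow> nat \<Rightarrow> int" where
  "indec_mult M k = 2 * int (dim_gen_eigenspace M 1 k)
      - int (dim_gen_eigenspace M 1 (k - 1)) - int (dim_gen_eigenspace M 1 (k + 1))"

(* Restriction R_{KC} \<rightarrow> R_{K\<tilde>C}, \<tilde>C = <g^p> of order p^(n-1): V_r restricts to the
   module on which g^p acts by (J_r)^p; extended Z-linearly. *)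
definition restr :: "'a :: field itself \<Rightarrow> nat \<Rightarrow> nat \<Rightarrow> (nat \<Rightarrow> int) \<Rightarrow> (nat \<Rightarrow> int)" where
  "restr T p n A = (\<lambda>k. if 1 \<le> k \<and> k \<le> p ^ (n - 1)
      then (\<Sum>r\<in>{1..p ^ n}. A r * indec_mult ((V_mat T r) ^\<^sub>m p) k) else 0)"

end

theory Submission imports Defs begin

lemma pow_mat_add: assumes A: "(A::'b::semiring_1 mat) \<in> carrier_mat n n"
  shows "A ^\<^sub>m (a + b) = A ^\<^sub>m a * A ^\<^sub>m b"
proof (induct b)
  case 0 then show ?case using A by simp
next
  case (Suc b)
  have "A ^\<^sub>m (a + Suc b) = (A ^\<^sub>m a * A ^\<^sub>m b) * A" using Suc by simp
  also have "\<dots> = A ^\<^sub>m a * (A ^\<^sub>m b * A)"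
    by (rule assoc_mult_mat[of _ n n _ n _ n], insert A, auto)
  finally show ?case by simp
qed

lemma pow_mat_mult: assumes A: "(A::'b::semiring_1 mat) \<in> carrier_mat n n"
  shows "(A ^\<^sub>m a) ^\<^sub>m k = A ^\<^sub>m (a * k)"
proof (induct k)
  case 0 then show ?case using A by simp
next
  case (Suc k)
  then show ?case using pow_mat_add[OF A, of "a*k" a] by (simp add: add.commute)
qed

lemma char_pow: assumes "prime p" "CHAR('a::field) = p"
  shows "char_matrix (jordan_block m (1::'a) ^\<^sub>m p) 1 = jordan_block m (0::'a) ^\<^sub>m p"
proof (rule eq_matI)
  fix i j assume ij: "i < dim_row (jordan_block m (0::'a) ^\<^sub>m p)" "j < dim_col (jordan_block m (0::'a) ^\<^sub>m p)"
  have p0: "p \<noteq> 0" using assms(1) by auto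
  from ij p0 have i: "i < m" and j: "j < m" by auto
  have ch: "(of_nat (p choose d) :: 'a) = 0" if "0 < d" "d < p" for d
    using dvd_choose_prime[of d p] that assms by (simp add: of_nat_eq_0_iff_char_dvd)
  show "char_matrix (jordan_block m (1::'a) ^\<^sub>m p) 1 $$ (i, j) = (jordan_block m (0::'a) ^\<^sub>m p) $$ (i, j)"
    unfolding char_matrix_def jordan_block_zero_pow jordan_block_pow
    using i j p0 ch[of "j - i"] by (auto simp: binomial_eq_0 power_0_left)
qed (auto simp: char_matrix_def)

lemma dge: assumes "prime p" "CHAR('a::field) = p"
  shows "dim_gen_eigenspace (V_mat TYPE('a) m ^\<^sub>m p) 1 k = min (p*k) m"
proof -
  have "dim_gen_eigenspace (V_mat TYPE('a) m ^\<^sub>m p) 1 k = kernel_dim ((jordan_block m (0::'a) ^\<^sub>m p) ^\<^sub>m k)"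
    unfolding dim_gen_eigenspace_def V_mat_def char_pow[OF assms] ..
  also have "\<dots> = kernel_dim (jordan_block m (0::'a) ^\<^sub>m (p*k))"
    by (subst pow_mat_mult[of _ m], auto)
  also have "\<dots> = min (p*k) m"
    unfolding kernel_dim_def jordan_block_pow_dim by (rule dim_kernel_zero_jordan_block_pow)
  finally show ?thesis .
qed

lemma im: assumes "prime p" "CHAR('a::field) = p" "k \<ge> 1" "s \<ge> 1"
  shows "indec_mult (V_mat TYPE('a) (p*s) ^\<^sub>m p) k = (if k = s then int p else 0)"
proof -
  have m: "\<And>x. min (p*x) (p*s) = p * min x s" using prime_gt_0_nat[OF assms(1)] by (auto simp: min_def)
  obtain k' where k: "k = Suc k'" using assms(3) by (cases k) auto
  show ?thesis unfolding indec_mult_def dge[OF assms(1,2)] m k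
    by (cases "k' < s"; cases "Suc k' = s"; cases "Suc k' < s"; simp add: min_def algebra_simps)
qed

theorem corollary4p2:
  fixes p n :: nat and A B :: "nat \<Rightarrow> int"
  assumes "prime p" and "CHAR('a::field) = p" and "n \<ge> 1"
    and "A \<in> perm_span p n" and "B \<in> perm_span p n"
    and "A 1 = B 1"
    and "restr TYPE('a) p n A = restr TYPE('a) p n B"
  shows "A = B"
proof
  fix r
  have p1: "p > 1" using assms(1) prime_gt_1_nat by blast
  let ?f = "\<lambda>r k. indec_mult ((V_mat TYPE('a) r) ^\<^sub>m p) k"
  show "A r = B r"
  proof (rule ccontr)
    assume ne: "A r \<noteq> B r"
    have ex: "\<exists>i\<le>n. x = p ^ i" if "C \<in> perm_span p n" "C x \<noteq> 0" for C x
      using that unfolding perm_span_def by blast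
    from ne have "A r \<noteq> 0 \<or> B r \<noteq> 0" by auto
    then obtain i where i: "i \<le> n" "r = p ^ i" using ex assms(4,5) by blast
    have i0: "i \<noteq> 0" using ne assms(6) i by (cases i) auto
    define k where "k = p ^ (i - 1)"
    have k1: "1 \<le> k" "k \<le> p ^ (n - 1)" unfolding k_def using p1 i
      by (auto intro: power_increasing)
    have "restr TYPE('a) p n A k = restr TYPE('a) p n B k" using assms(7) by simp
    hence "(\<Sum>r\<in>{1..p ^ n}. A r * ?f r k) = (\<Sum>r\<in>{1..p ^ n}. B r * ?f r k)"
      unfolding restr_def using k1 by simp
    hence z: "(\<Sum>r\<in>{1..p ^ n}. (A r - B r) * ?f r k) = 0"
      by (simp add: sum_subtractf left_diff_distrib)
    have pi: "p ^ i = p * k" unfolding k_def using i0 by (cases i) auto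
    have rin: "p ^ i \<in> {1..p ^ n}" using p1 i by (auto intro: power_increasing)
    have rest: "(\<Sum>r\<in>{1..p ^ n} - {p ^ i}. (A r - B r) * ?f r k) = 0"
    proof (rule sum.neutral, intro ballI)
      fix r' assume r': "r' \<in> {1..p ^ n} - {p ^ i}"
      show "(A r' - B r') * ?f r' k = 0"
      proof (cases "A r' = B r'")
        case False
        hence "A r' \<noteq> 0 \<or> B r' \<noteq> 0" by auto
        then obtain j where j: "j \<le> n" "r' = p ^ j" using ex assms(4,5) by blast
        have j0: "j \<noteq> 0" using False assms(6) j by (cases j) auto
        have ji: "j \<noteq> i" using r' j by auto
        have rj: "r' = p * p ^ (j - 1)" using j j0 by (cases j) auto
        have "k \<noteq> p ^ (j - 1)" unfolding k_def using ji i0 j0 p1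
          by (simp add: power_inject_exp)
        moreover have "p ^ (j - 1) \<ge> 1" using p1 by simp
        ultimately have "?f r' k = 0" unfolding rj using im[OF assms(1,2) k1(1)] by simp
        thus ?thesis by simp
      qed simp
    qed
    have "(\<Sum>r\<in>{1..p ^ n}. (A r - B r) * ?f r k) = (A (p^i) - B (p^i)) * ?f (p^i) k"
      using sum.remove[OF _ rin, of "\<lambda>r. (A r - B r) * ?f r k"] rest by simp
    also have "?f (p^i) k = int p" unfolding pi using im[OF assms(1,2) k1(1) k1(1)] by simp
    finally have "(A (p^i) - B (p^i)) * int p = 0" using z by simp
    hence "A (p^i) = B (p^i)" using p1 by simp
    thus False using ne i by simp
  qed
qed

end
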